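(* Let $T_{\max}$ be a positive integer and suppose the attack period $T_a=[k_s,k_e)$ satisfies $|T_a|=k_e-k_s\le T_{\max}$. For every integer timestep $k\ge T_{\max}$, writing $k'=k-T_{\max}$, the set $$\hat{I}_k=\mathbf{Post}_{u_{c,k'}\dots u_{c,k-1}}\big(\tilde{x}_{k'}\big)\cup\{\tilde{x}_k\}$$ contains the actual state, i.e. $x_k\in\hat{I}_k$.
   Context: There are $n$ vehicles with positions $x_k\in\mathbb{R}^n$ evolving in discrete time by $x_{k+1}=x_k+u_k+\delta_k$. The coordinates are partitioned into controlled and uncontrolled vehicles, and $u_k=(u_{c,k},u_{uc,k})$ with $u_{c,k}\in U_c$ (applied input of the controlled vehicles, known) and $u_{uc,k}\in U_{uc}$ (unknown inputs of uncontrolled vehicles). The disturbance satisfies $\delta_k\in\Delta=[\delta_{\min},\delta_{\max}]^n$. The multi-step post operator is $\mathbf{Post}_{u_{c,1}\dots u_{c,m}}(y)=\big\{y+\sum_{j=1}^m (u_{c,j},u_{uc,j})+\sum_{j=1}^m\delta_j:\ u_{uc,j}\in U_{uc},\ \delta_j\in\Delta\big\}$, where $(u_c,u_{uc})$ denotes the vector in $\mathbb{R}^n$ whose controlled coordinates are $u_c$ and uncontrolled coordinates are $u_{uc}$. Sensor attack: the received measurement is $\tilde{x}_k=x_k+e_k$ for $k\in T_a=[k_s,k_e)$ (a single interval of integer timesteps) with arbitrary error $e_k\in\mathbb{R}^n$, and $\tilde{x}_k=x_k$ for $k\notin T_a$. *)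

theory Defs
  imports "HOL-Analysis.Analysis"
begin

text \<open>Vehicles are indexed by the finite type 'n; C is the set of controlled vehicles.
  (u_c, u_uc) is the vector whose controlled coordinates come from u_c and whose
  uncontrolled coordinates come from u_uc (other coordinates of the arguments are ignored).\<close>
definition combine :: "'n set \<Rightarrow> real^'n \<Rightarrow> real^'n \<Rightarrow> real^'n" where
  "combine C uc uuc = (\<chi> i. if i \<in> C then uc $ i else uuc $ i)"

definition Delta_box :: "real \<Rightarrow> real \<Rightarrow> (real^'n) set" where
  "Delta_box dmin dmax = {d. \<forall>i. dmin \<le> d $ i \<and> d $ i \<le> dmax}"

definition Post :: "'n set \<Rightarrow> (real^'n) set \<Rightarrow> (real^'n) set \<Rightarrow> (real^'n) list \<Rightarrow> real^'n \<Rightarrow> (real^'n) set" where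
  "Post C Uuc Delta ucs y =
     {y + (\<Sum>j<length ucs. combine C (ucs ! j) (w j)) + (\<Sum>j<length ucs. d j) | w d.
        (\<forall>j<length ucs. w j \<in> Uuc) \<and> (\<forall>j<length ucs. d j \<in> Delta)}"

definition measured :: "(nat \<Rightarrow> real^'n) \<Rightarrow> (nat \<Rightarrow> real^'n) \<Rightarrow> nat \<Rightarrow> nat \<Rightarrow> nat \<Rightarrow> real^'n" where
  "measured x e ks ke k = (if ks \<le> k \<and> k < ke then x k + e k else x k)"

end

theory Submission
  imports Defs
begin

lemma unroll:
  assumes dyn: "\<And>j. x (Suc j) = x j + combine C (uc j) (uuc j) + \<delta> j"
  shows "x (a + m) = x a + (\<Sum>j<m. combine C (uc (a+j)) (uuc (a+j))) + (\<Sum>j<m. \<delta> (a+j))"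
  by (induction m) (auto simp: dyn algebra_simps)

theorem lemma3:
  fixes x uc uuc \<delta> e :: "nat \<Rightarrow> real^'n"
    and C :: "'n set" and Uc Uuc :: "(real^'n) set"
    and dmin dmax :: real and ks ke Tmax k :: nat
  assumes dyn: "\<And>j. x (Suc j) = x j + combine C (uc j) (uuc j) + \<delta> j"
    and uc_in: "\<And>j. uc j \<in> Uc"
    and uuc_in: "\<And>j. uuc j \<in> Uuc"
    and dist_in: "\<And>j. \<delta> j \<in> Delta_box dmin dmax"
    and Tmax_pos: "0 < Tmax"
    and attack_len: "ke - ks \<le> Tmax"
    and k_ge: "Tmax \<le> k"
  shows "x k \<in> Post C Uuc (Delta_box dmin dmax) (map uc [k - Tmax..<k]) (measured x e ks ke (k - Tmax))
                \<union> {measured x e ks ke k}"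
proof (cases "ks \<le> k - Tmax \<and> k - Tmax < ke")
  case True
  then have "\<not> (ks \<le> k \<and> k < ke)" using attack_len k_ge by linarith
  then have "measured x e ks ke k = x k" unfolding measured_def by presburger
  then show ?thesis by simp
next
  case False
  define a where "a = k - Tmax"
  have ka: "k = a + Tmax" using k_ge a_def by simp
  have xk: "x k = x a + (\<Sum>j<Tmax. combine C (uc (a+j)) (uuc (a+j))) + (\<Sum>j<Tmax. \<delta> (a+j))"
    using unroll[of x C uc uuc \<delta> a Tmax, OF dyn] ka by simp
  have "x k \<in> Post C Uuc (Delta_box dmin dmax) (map uc [k - Tmax..<k]) (x a)"
    unfolding Post_def
  proof (intro CollectI exI conjI)
    show "x k = x a + (\<Sum>j<length (map uc [k - Tmax..<k]). combine C (map uc [k - Tmax..<k] ! j) (uuc (a+j)))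
       + (\<Sum>j<length (map uc [k - Tmax..<k]). \<delta> (a+j))"
    proof -
      have L: "length (map uc [k - Tmax..<k]) = Tmax" using ka by simp
      have N: "\<And>j. j < Tmax \<Longrightarrow> map uc [k - Tmax..<k] ! j = uc (a+j)"
        using ka a_def by simp
      have "(\<Sum>j<Tmax. combine C (uc (a+j)) (uuc (a+j))) = (\<Sum>j<Tmax. combine C (map uc [k - Tmax..<k] ! j) (uuc (a+j)))"
        by (rule sum.cong) (simp_all add: N)
      then show ?thesis unfolding L xk by simp
    qed
    show "\<forall>j<length (map uc [k - Tmax..<k]). uuc (a+j) \<in> Uuc" using uuc_in by auto
    show "\<forall>j<length (map uc [k - Tmax..<k]). \<delta> (a+j) \<in> Delta_box dmin dmax" using dist_in by auto
  qed
  moreover have "measured x e ks ke (k - Tmax) = x a" using False a_def unfolding measured_def by presburger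
  ultimately show ?thesis by simp
qed

end
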